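(* Let $\epsilon\ge 0$ and let $A\subseteq\{0,1\}^n$ with $|A|\ge 2^{(1-\epsilon)n}$. Then for any $L\subseteq[n]$ there is a subset $A'\subseteq A$ that is $\epsilon$-dense with respect to $L$.
   Context: $[n]=\{1,\dots,n\}$. For $x\in\{0,1\}^n$ and $P\subseteq[n]$, $x_P\in\{0,1\}^P$ denotes the projection of $x$ onto the coordinates in $P$, and for $X\subseteq\{0,1\}^n$, $X_P=\{x_P: x\in X\}$. A set $A\subseteq\{0,1\}^n$ is $\epsilon$-dense with respect to $L\subseteq[n]$ if $|A_L|\ge 2^{|L|-\epsilon n-1}$ and for every $a\in A$ the number of $a'\in A$ with $a'_L=a_L$ is at least $2^{n-|L|-\epsilon n-1}$. *)

theory Defs
  imports "HOL-Analysis.Analysis"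
begin

text \<open>The hypercube {0,1}^n, with coordinates indexed by [n] = {1..n}; a point is a
  boolean function on nat that is False outside {1..n}.\<close>
definition cube :: "nat \<Rightarrow> (nat \<Rightarrow> bool) set" where
  "cube n = {x. \<forall>i. i \<notin> {1..n} \<longrightarrow> \<not> x i}"

definition proj :: "nat set \<Rightarrow> (nat \<Rightarrow> bool) \<Rightarrow> (nat \<Rightarrow> bool)" where
  "proj P x = (\<lambda>i. if i \<in> P then x i else False)"

definition eps_dense :: "nat \<Rightarrow> real \<Rightarrow> nat set \<Rightarrow> (nat \<Rightarrow> bool) set \<Rightarrow> bool" where
  "eps_dense n \<epsilon> L A \<longleftrightarrow>
     real (card (proj L ` A)) \<ge> 2 powr (real (card L) - \<epsilon> * real n - 1) \<and>
     (\<forall>a\<in>A. real (card {a'\<in>A. proj L a' = proj L a})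
              \<ge> 2 powr (real n - real (card L) - \<epsilon> * real n - 1))"

end

theory Submission
  imports Defs
begin

definition supp_set :: "nat set \<Rightarrow> (nat \<Rightarrow> bool) set" where
  "supp_set P = {x. \<forall>i. i \<notin> P \<longrightarrow> \<not> x i}"

lemma bij_supp: "bij_betw (\<lambda>x. {i. x i}) (supp_set P) (Pow P)"
proof (rule bij_betwI[where g="\<lambda>S i. i \<in> S"])
  show "(\<lambda>x. {i. x i}) \<in> supp_set P \<rightarrow> Pow P" by (auto simp: supp_set_def)
  show "(\<lambda>S i. i \<in> S) \<in> Pow P \<rightarrow> supp_set P" by (auto simp: supp_set_def)
qed auto

lemma card_supp: "finite P \<Longrightarrow> card (supp_set P) = 2 ^ card P"
  using bij_betw_same_card[OF bij_supp[of P]] by (simp add: card_Pow)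

lemma finite_supp: "finite P \<Longrightarrow> finite (supp_set P)"
  using bij_betw_finite[OF bij_supp[of P]] by simp

lemma cube_supp: "cube n = supp_set {1..n}"
  by (simp add: cube_def supp_set_def)

lemma proj_supp: "proj P x \<in> supp_set P"
  by (simp add: proj_def supp_set_def)

lemma fiber_card:
  assumes "B \<subseteq> cube n" "L \<subseteq> {1..n}"
  shows "card {a'\<in>B. proj L a' = y} \<le> 2 ^ (n - card L)"
proof -
  let ?R = "{1..n} - L"
  have inj: "inj_on (proj ?R) {a'\<in>B. proj L a' = y}"
  proof (rule inj_onI)
    fix u v assume u: "u \<in> {a'\<in>B. proj L a' = y}" and v: "v \<in> {a'\<in>B. proj L a' = y}"
      and e: "proj ?R u = proj ?R v"
    show "u = v"
    proof
      fix i
      show "u i = v i"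
      proof (cases "i \<in> L")
        case True
        have "proj L u = proj L v" using u v by simp
        from fun_cong[OF this, of i] True show ?thesis by (simp add: proj_def)
      next
        case False
        show ?thesis
        proof (cases "i \<in> {1..n}")
          case True
          then show ?thesis using False fun_cong[OF e, of i] by (auto simp: proj_def)
        next
          case F2: False
          then show ?thesis using u v assms(1) by (auto simp: cube_def)
        qed
      qed
    qed
  qed
  have "card {a'\<in>B. proj L a' = y} = card (proj ?R ` {a'\<in>B. proj L a' = y})"
    using card_image[OF inj] by simp
  also have "\<dots> \<le> card (supp_set ?R)"
    by (rule card_mono) (auto simp: finite_supp proj_supp)
  also have "\<dots> = 2 ^ (n - card L)"
    using assms(2) by (simp add: card_supp card_Diff_subset finite_subset)
  finally show ?thesis .
qed

theorem claim1:
  fixes n :: nat and \<epsilon> :: real and A :: "(nat \<Rightarrow> bool) set" and L :: "nat set"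
  assumes "\<epsilon> \<ge> 0"
    and "A \<subseteq> cube n"
    and "real (card A) \<ge> 2 powr ((1 - \<epsilon>) * real n)"
    and "L \<subseteq> {1..n}"
  shows "\<exists>A'. A' \<subseteq> A \<and> eps_dense n \<epsilon> L A'"
proof -
  define k where "k = card L"
  define T where "T = (2::real) powr (real n - real k - \<epsilon> * real n - 1)"
  define fib where "fib B y = {a'\<in>B. proj L a' = y}" for B y
  define A' where "A' = {a\<in>A. real (card (fib A (proj L a))) \<ge> T}"
  have finL: "finite L" using assms(4) finite_subset by blast
  have kn: "k \<le> n" unfolding k_def using card_mono[OF _ assms(4)] by simp
  have finA: "finite A" using assms(2) finite_supp[of "{1..n}"] cube_supp finite_subset by auto
  have A'A: "A' \<subseteq> A" by (auto simp: A'_def)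
  have finA': "finite A'" using finA A'A finite_subset by blast
  have fibeq: "fib A' (proj L a) = fib A (proj L a)" if "a \<in> A'" for a
    using that by (auto simp: fib_def A'_def)
  have imgA: "card (proj L ` A) \<le> 2 ^ k"
  proof -
    have "card (proj L ` A) \<le> card (supp_set L)"
      by (rule card_mono) (auto simp: finite_supp finL proj_supp)
    thus ?thesis using card_supp[OF finL] k_def by simp
  qed
  have rem: "real (card (A - A')) \<le> 2 ^ k * T"
  proof -
    have eq: "A - A' = (\<Union>y\<in>proj L ` (A - A'). fib A y)"
      by (auto simp: fib_def A'_def)
    have "card (A - A') \<le> (\<Sum>y\<in>proj L ` (A - A'). card (fib A y))"
      by (subst eq) (rule card_UN_le, simp add: finA)
    hence "real (card (A - A')) \<le> (\<Sum>y\<in>proj L ` (A - A'). real (card (fib A y)))"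
      by (metis of_nat_le_iff of_nat_sum)
    also have "\<dots> \<le> (\<Sum>y\<in>proj L ` (A - A'). T)"
    proof (rule sum_mono)
      fix y assume "y \<in> proj L ` (A - A')"
      then obtain a where a: "a \<in> A - A'" "y = proj L a" by auto
      thus "real (card (fib A y)) \<le> T" by (auto simp: A'_def)
    qed
    also have "\<dots> = real (card (proj L ` (A - A'))) * T" by simp
    also have "\<dots> \<le> 2 ^ k * T"
    proof (rule mult_right_mono)
      have "card (proj L ` (A - A')) \<le> card (proj L ` A)"
        by (rule card_mono) (auto simp: finA)
      hence "card (proj L ` (A - A')) \<le> (2::nat) ^ k" using imgA by simp
      thus "real (card (proj L ` (A - A'))) \<le> 2 ^ k"
        by (metis of_nat_le_iff of_nat_numeral of_nat_power)
      show "0 \<le> T" by (simp add: T_def)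
    qed
    finally show ?thesis .
  qed
  have kT: "2 ^ k * T = (2::real) powr ((1 - \<epsilon>) * real n) / 2"
  proof -
    have "2 ^ k * T = 2 powr (real k) * 2 powr (real n - real k - \<epsilon> * real n - 1)"
      by (simp add: T_def powr_realpow)
    also have "\<dots> = 2 powr ((1 - \<epsilon>) * real n - 1)"
      by (simp add: powr_add[symmetric] algebra_simps)
    also have "\<dots> = 2 powr ((1 - \<epsilon>) * real n) / 2"
      by (simp add: powr_diff)
    finally show ?thesis .
  qed
  have cardA': "real (card A') \<ge> 2 powr ((1 - \<epsilon>) * real n) / 2"
  proof -
    have "card A = card A' + card (A - A')"
      using card_Diff_subset[OF finA' A'A] card_mono[OF finA A'A] by simp
    thus ?thesis using rem kT assms(3) by simp
  qed
  have up: "real (card A') \<le> real (card (proj L ` A')) * 2 ^ (n - k)"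
  proof -
    have eq: "A' = (\<Union>y\<in>proj L ` A'. fib A' y)" by (auto simp: fib_def)
    have "card A' \<le> (\<Sum>y\<in>proj L ` A'. card (fib A' y))"
      by (subst eq) (rule card_UN_le, simp add: finA')
    also have "\<dots> \<le> (\<Sum>y\<in>proj L ` A'. 2 ^ (n - k))"
      apply (rule sum_mono)
      unfolding fib_def k_def
      using fiber_card[of A' n L] A'A assms(2,4) by auto
    also have "\<dots> = card (proj L ` A') * 2 ^ (n - k)" by simp
    finally show ?thesis by (metis of_nat_le_iff of_nat_mult of_nat_numeral of_nat_power)
  qed
  have img': "real (card (proj L ` A')) \<ge> 2 powr (real k - \<epsilon> * real n - 1)"
  proof -
    have p: "(2::real) ^ (n - k) = 2 powr (real n - real k)"
      using kn by (simp add: powr_realpow[symmetric] of_nat_diff)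
    have "2 powr (real k - \<epsilon> * real n - 1) * 2 ^ (n - k) = 2 powr ((1 - \<epsilon>) * real n) / (2::real)"
    proof -
      have "2 powr (real k - \<epsilon> * real n - 1) * 2 powr (real n - real k) = (2::real) powr ((1 - \<epsilon>) * real n - 1)"
        by (simp add: powr_add[symmetric] algebra_simps)
      thus ?thesis by (simp add: p powr_diff)
    qed
    hence "2 powr (real k - \<epsilon> * real n - 1) * 2 ^ (n - k) \<le> real (card (proj L ` A')) * 2 ^ (n - k)"
      using cardA' up by linarith
    thus ?thesis by simp
  qed
  have "eps_dense n \<epsilon> L A'"
    unfolding eps_dense_def
  proof
    show "2 powr (real (card L) - \<epsilon> * real n - 1) \<le> real (card (proj L ` A'))"
      using img' k_def by simp
    show "\<forall>a\<in>A'. 2 powr (real n - real (card L) - \<epsilon> * real n - 1)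
              \<le> real (card {a' \<in> A'. proj L a' = proj L a})"
    proof
      fix a assume a: "a \<in> A'"
      have "{a' \<in> A'. proj L a' = proj L a} = fib A (proj L a)"
        using fibeq[OF a] by (simp add: fib_def)
      thus "2 powr (real n - real (card L) - \<epsilon> * real n - 1)
              \<le> real (card {a' \<in> A'. proj L a' = proj L a})"
        using a by (simp add: A'_def T_def k_def)
    qed
  qed
  thus ?thesis using A'A by blast
qed

end
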